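(* There exists a universal constant $c>0$ such that for every Boolean function $f:\Omega^\infty\to\Omega$ (not necessarily finitary) with $\delta:=\sup_iI_i(f)>0$, $$I(f)\ge c\,\mathrm{Var}(f)\log\frac1\delta.$$
   Context: Let $\Omega=\{-1,1\}$ and $\Omega^\infty=\{-1,1\}^{\mathbb N}$ with the uniform product probability measure; $\omega$ denotes a uniformly random element. A Boolean function is a measurable map $f:\Omega^\infty\to\Omega$. $\omega^{(k)}$ is $\omega$ with bit $k$ flipped; $I_k(f)=\mathbb P(f(\omega^{(k)})\ne f(\omega))$ and $I(f)=\sum_kI_k(f)$. $\log$ is the natural logarithm. *)

theory Defs
  imports "HOL-Probability.Probability"
begin

text \<open>The infinite cube: coordinates in bool (True ~ 1, False ~ -1), uniform product measure.\<close>
definition cube :: "(nat \<Rightarrow> bool) measure" where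
  "cube = PiM (UNIV :: nat set) (\<lambda>_. measure_pmf (bernoulli_pmf (1/2)))"

definition flip :: "nat \<Rightarrow> (nat \<Rightarrow> bool) \<Rightarrow> (nat \<Rightarrow> bool)" where
  "flip k \<omega> = fun_upd \<omega> k (\<not> \<omega> k)"

definition boolean_fun :: "((nat \<Rightarrow> bool) \<Rightarrow> real) \<Rightarrow> bool" where
  "boolean_fun f \<longleftrightarrow> f \<in> borel_measurable cube \<and> (\<forall>\<omega>. f \<omega> \<in> {-1, 1})"

definition influence :: "nat \<Rightarrow> ((nat \<Rightarrow> bool) \<Rightarrow> real) \<Rightarrow> real" where
  "influence k f = measure cube {\<omega> \<in> space cube. f (flip k \<omega>) \<noteq> f \<omega>}"

definition total_influence :: "((nat \<Rightarrow> bool) \<Rightarrow> real) \<Rightarrow> ennreal" where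
  "total_influence f = (\<Sum>k. ennreal (influence k f))"

definition Var :: "((nat \<Rightarrow> bool) \<Rightarrow> real) \<Rightarrow> real" where
  "Var f = (\<integral>\<omega>. (f \<omega> - (\<integral>\<eta>. f \<eta> \<partial>cube))\<^sup>2 \<partial>cube)"

end

theory Submission
  imports Defs
begin

abbreviation "BB \<equiv> measure_pmf (bernoulli_pmf (1/2))"

interpretation C: sequence_space BB
  by unfold_locales

lemma cube_S: "cube = C.S" by (simp add: cube_def)

lemma space_cube[simp]: "space cube = UNIV"
  by (simp add: cube_def space_PiM)

lemma sets_BB[simp]: "sets BB = UNIV" by simp

lemma prob_cube: "prob_space cube"
  unfolding cube_S by (rule C.P.prob_space_axioms)

lemma meas_coord[measurable]: "(\<lambda>\<omega>. \<omega> i) \<in> measurable cube (count_space UNIV)"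
  unfolding cube_def
  by (rule measurable_compose[OF measurable_component_singleton]) auto

lemma prod_emb_cube: "prod_emb UNIV (\<lambda>_. BB) J (Pi\<^sub>E J E) = {\<omega>. \<forall>i\<in>J. \<omega> i \<in> E i}"
  by (auto simp: prod_emb_def PiE_iff)

lemma meas_to_BB: "g \<in> measurable M (count_space UNIV) \<Longrightarrow> g \<in> measurable M BB"
  by (simp add: measurable_cong_sets)

lemma flip_meas[measurable]: "flip k \<in> measurable cube cube"
  unfolding cube_def flip_def
  apply (rule measurable_PiM_single')
   apply (rule meas_to_BB)
   apply (unfold cube_def[symmetric])
   apply simp
  apply (auto simp: space_PiM)
  done

lemma emeasure_BB_Not: "emeasure BB (Not -` X) = emeasure BB X"
proof -
  have f: "finite (Not -` X)" "finite X" by auto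
  have "(\<Sum>s\<in>Not -` X. pmf (bernoulli_pmf (1/2)) s) = (\<Sum>s\<in>X. pmf (bernoulli_pmf (1/2)) s)"
    by (rule sum.reindex_bij_witness[of _ Not Not]) auto
  then show ?thesis by (simp add: emeasure_measure_pmf_finite f)
qed

lemma distr_flip: "distr cube cube (flip k) = cube"
proof -
  have "distr C.S C.S (flip k) = C.S"
  proof (rule C.PiM_eq)
    show "sets (distr C.S C.S (flip k)) = sets C.S" by simp
    fix J :: "nat set" and F :: "nat \<Rightarrow> bool set" assume J: "finite J" "J \<subseteq> UNIV" "\<And>j. j \<in> J \<Longrightarrow> F j \<in> sets BB"
    let ?F = "\<lambda>j. if j = k then Not -` F j else F j"
    have pre: "flip k -` prod_emb UNIV (\<lambda>_. BB) J (Pi\<^sub>E J F) \<inter> space C.S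
        = prod_emb UNIV (\<lambda>_. BB) J (Pi\<^sub>E J ?F)"
      unfolding prod_emb_cube by (auto simp: flip_def space_PiM)
    have "emeasure (distr C.S C.S (flip k)) (prod_emb UNIV (\<lambda>_. BB) J (Pi\<^sub>E J F))
        = emeasure C.S (prod_emb UNIV (\<lambda>_. BB) J (Pi\<^sub>E J ?F))"
      using flip_meas[unfolded cube_S] J
      by (subst emeasure_distr) (auto simp: pre)
    also have "\<dots> = (\<Prod>j\<in>J. emeasure BB (?F j))"
      using J by (intro C.emeasure_PiM_emb) auto
    also have "\<dots> = (\<Prod>j\<in>J. emeasure BB (F j))"
      by (rule prod.cong) (auto simp: emeasure_BB_Not)
    finally show "emeasure (distr C.S C.S (flip k)) (prod_emb UNIV (\<lambda>_. BB) J (Pi\<^sub>E J F))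
        = (\<Prod>j\<in>J. emeasure BB (F j))" .
  qed
  then show ?thesis by (simp add: cube_S)
qed

lemma integral_flip:
  fixes F :: "_ \<Rightarrow> real"
  assumes "F \<in> borel_measurable cube"
  shows "(\<integral>\<omega>. F (flip k \<omega>) \<partial>cube) = (\<integral>\<omega>. F \<omega> \<partial>cube)"
proof -
  have "(\<integral>\<omega>. F \<omega> \<partial>cube) = (\<integral>\<omega>. F \<omega> \<partial>distr cube cube (flip k))"
    by (simp add: distr_flip)
  also have "\<dots> = (\<integral>\<omega>. F (flip k \<omega>) \<partial>cube)"
    using assms by (subst integral_distr) auto
  finally show ?thesis by simp
qed

abbreviation EE :: "((nat \<Rightarrow> bool) \<Rightarrow> real) \<Rightarrow> real" where
  "EE F \<equiv> integral\<^sup>L cube F"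

definition bm :: "((nat \<Rightarrow> bool) \<Rightarrow> real) \<Rightarrow> bool" where
  "bm F \<longleftrightarrow> F \<in> borel_measurable cube \<and> (\<exists>B. \<forall>\<omega>. \<bar>F \<omega>\<bar> \<le> B)"

interpretation PC: prob_space cube by (rule prob_cube)

lemma bm_int: "bm F \<Longrightarrow> integrable cube F"
  unfolding bm_def by (metis (mono_tags) AE_I2 PC.integrable_const_bound real_norm_def)

lemma bm_meas: "bm F \<Longrightarrow> F \<in> borel_measurable cube"
  unfolding bm_def by auto

lemma bm_const[simp]: "bm (\<lambda>_. c)"
  unfolding bm_def by auto

lemma bm_add: "bm F \<Longrightarrow> bm G \<Longrightarrow> bm (\<lambda>\<omega>. F \<omega> + G \<omega>)"
  unfolding bm_def
proof (safe)
  fix B1 B2 assume a: "\<forall>\<omega>. \<bar>F \<omega>\<bar> \<le> B1" "\<forall>\<omega>. \<bar>G \<omega>\<bar> \<le> B2"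
  show "\<exists>B. \<forall>\<omega>. \<bar>F \<omega> + G \<omega>\<bar> \<le> B"
  proof (intro exI allI)
    fix \<omega> show "\<bar>F \<omega> + G \<omega>\<bar> \<le> B1 + B2"
      using abs_triangle_ineq[of "F \<omega>" "G \<omega>"] a[rule_format, of \<omega>] by linarith
  qed
qed auto

lemma bm_mult: "bm F \<Longrightarrow> bm G \<Longrightarrow> bm (\<lambda>\<omega>. F \<omega> * G \<omega>)"
  unfolding bm_def
proof (safe)
  fix B1 B2 assume a: "\<forall>\<omega>. \<bar>F \<omega>\<bar> \<le> B1" "\<forall>\<omega>. \<bar>G \<omega>\<bar> \<le> B2"
  show "\<exists>B. \<forall>\<omega>. \<bar>F \<omega> * G \<omega>\<bar> \<le> B"
  proof (intro exI allI)
    fix \<omega>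
    have "\<bar>F \<omega> * G \<omega>\<bar> = \<bar>F \<omega>\<bar> * \<bar>G \<omega>\<bar>" by (simp add: abs_mult)
    also have "\<dots> \<le> B1 * B2" using a by (intro mult_mono) (auto intro: order_trans[OF abs_ge_zero])
    finally show "\<bar>F \<omega> * G \<omega>\<bar> \<le> B1 * B2" .
  qed
qed auto

lemma bm_minus: "bm F \<Longrightarrow> bm (\<lambda>\<omega>. - F \<omega>)"
  unfolding bm_def by auto

lemma bm_diff: "bm F \<Longrightarrow> bm G \<Longrightarrow> bm (\<lambda>\<omega>. F \<omega> - G \<omega>)"
  using bm_add[OF _ bm_minus] by simp

lemma bm_cmult: "bm F \<Longrightarrow> bm (\<lambda>\<omega>. c * F \<omega>)"
  using bm_mult[OF bm_const] by simp

lemma bm_sum: "finite A \<Longrightarrow> (\<And>a. a \<in> A \<Longrightarrow> bm (F a)) \<Longrightarrow> bm (\<lambda>\<omega>. \<Sum>a\<in>A. F a \<omega>)"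
  by (induction A rule: finite_induct) (auto intro: bm_add)

lemma bm_pow: "bm F \<Longrightarrow> bm (\<lambda>\<omega>. F \<omega> ^ n)"
  by (induction n) (auto intro: bm_mult)

lemma bm_flip: "bm F \<Longrightarrow> bm (\<lambda>\<omega>. F (flip k \<omega>))"
  unfolding bm_def by auto

lemma E_add: "bm F \<Longrightarrow> bm G \<Longrightarrow> EE (\<lambda>\<omega>. F \<omega> + G \<omega>) = EE F + EE G"
  by (intro Bochner_Integration.integral_add bm_int)

lemma E_diff: "bm F \<Longrightarrow> bm G \<Longrightarrow> EE (\<lambda>\<omega>. F \<omega> - G \<omega>) = EE F - EE G"
  by (intro Bochner_Integration.integral_diff bm_int)

lemma E_sum: "finite A \<Longrightarrow> (\<And>a. a \<in> A \<Longrightarrow> bm (F a)) \<Longrightarrow> EE (\<lambda>\<omega>. \<Sum>a\<in>A. F a \<omega>) = (\<Sum>a\<in>A. EE (F a))"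
  by (intro Bochner_Integration.integral_sum bm_int)

lemma E_cmult: "EE (\<lambda>\<omega>. c * F \<omega>) = c * EE F"
  by simp

lemma prob_UNIV[simp]: "measure cube UNIV = 1"
  using PC.prob_space by simp

lemma E_const[simp]: "EE (\<lambda>_. c) = c"
  using PC.prob_space by simp

lemma E_mono: "bm F \<Longrightarrow> bm G \<Longrightarrow> (\<And>\<omega>. F \<omega> \<le> G \<omega>) \<Longrightarrow> EE F \<le> EE G"
  by (intro integral_mono bm_int) auto

lemma E_nonneg: "(\<And>\<omega>. 0 \<le> F \<omega>) \<Longrightarrow> 0 \<le> EE F"
  by (intro integral_nonneg_AE AE_I2) auto

lemma E_flip: "bm F \<Longrightarrow> EE (\<lambda>\<omega>. F (flip k \<omega>)) = EE F"
  by (intro integral_flip bm_meas)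

definition sg :: "bool \<Rightarrow> real" where "sg b = (if b then -1 else 1)"

definition chi :: "nat set \<Rightarrow> (nat \<Rightarrow> bool) \<Rightarrow> real" where
  "chi S \<omega> = (\<Prod>i\<in>S. sg (\<omega> i))"

lemma sg_sq[simp]: "sg b * sg b = 1" by (simp add: sg_def)
lemma abs_sg[simp]: "\<bar>sg b\<bar> = 1" by (simp add: sg_def)

lemma chi_empty[simp]: "chi {} = (\<lambda>_. 1)" by (auto simp: chi_def)

lemma abs_chi[simp]: "\<bar>chi S \<omega>\<bar> = 1"
  unfolding chi_def by (simp add: abs_prod)

lemma chi_meas: "chi S \<in> borel_measurable cube"
  unfolding chi_def sg_def by measurable

lemma bm_chi[simp]: "bm (chi S)"
  unfolding bm_def using chi_meas by (auto intro!: exI[of _ 1])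

lemma chi_flip: "finite S \<Longrightarrow> chi S (flip k \<omega>) = (if k \<in> S then - chi S \<omega> else chi S \<omega>)"
proof -
  assume S: "finite S"
  show ?thesis
  proof (cases "k \<in> S")
    case True
    have "chi S (flip k \<omega>) = sg (flip k \<omega> k) * (\<Prod>i\<in>S-{k}. sg (flip k \<omega> i))"
      unfolding chi_def using S True by (simp add: prod.remove)
    also have "(\<Prod>i\<in>S-{k}. sg (flip k \<omega> i)) = (\<Prod>i\<in>S-{k}. sg (\<omega> i))"
      by (rule prod.cong) (auto simp: flip_def)
    also have "chi S \<omega> = sg (\<omega> k) * (\<Prod>i\<in>S-{k}. sg (\<omega> i))"
      unfolding chi_def using S True by (simp add: prod.remove)
    moreover have "sg (flip k \<omega> k) = - sg (\<omega> k)" by (simp add: flip_def sg_def)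
    ultimately show ?thesis using True by simp
  next
    case False
    then show ?thesis unfolding chi_def by (auto intro!: prod.cong simp: flip_def)
  qed
qed

lemma E_chi: "finite S \<Longrightarrow> EE (chi S) = (if S = {} then 1 else 0)"
proof (cases "S = {}")
  case True then show ?thesis by (simp add: chi_def)
next
  case False
  assume S: "finite S"
  then obtain k where k: "k \<in> S" using False by auto
  have "EE (chi S) = EE (\<lambda>\<omega>. chi S (flip k \<omega>))" by (rule E_flip[symmetric]) simp
  also have "\<dots> = EE (\<lambda>\<omega>. - chi S \<omega>)" using S k by (simp add: chi_flip)
  finally show ?thesis using False by simp
qed

lemma chi_mult: "finite S \<Longrightarrow> finite T \<Longrightarrow> chi S \<omega> * chi T \<omega> = chi ((S - T) \<union> (T - S)) \<omega>"
proof -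
  assume f: "finite S" "finite T"
  have S: "chi S \<omega> = chi (S - T) \<omega> * chi (S \<inter> T) \<omega>"
    unfolding chi_def using f by (subst prod.union_disjoint[symmetric]) (auto intro!: prod.cong)
  have T: "chi T \<omega> = chi (T - S) \<omega> * chi (S \<inter> T) \<omega>"
    unfolding chi_def using f by (subst prod.union_disjoint[symmetric]) (auto intro!: prod.cong)
  have I: "chi (S \<inter> T) \<omega> * chi (S \<inter> T) \<omega> = 1"
    unfolding chi_def by (simp flip: prod.distrib)
  have U: "chi ((S - T) \<union> (T - S)) \<omega> = chi (S - T) \<omega> * chi (T - S) \<omega>"
    unfolding chi_def using f by (subst prod.union_disjoint) auto
  show ?thesis unfolding S T U using I by (metis mult.commute mult.left_commute mult.right_neutral)
qed

lemma E_chi_chi: "finite S \<Longrightarrow> finite T \<Longrightarrow> EE (\<lambda>\<omega>. chi S \<omega> * chi T \<omega>) = (if S = T then 1 else 0)"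
  by (simp add: chi_mult E_chi) blast

definition wp :: "nat \<Rightarrow> (nat set \<Rightarrow> real) \<Rightarrow> (nat \<Rightarrow> bool) \<Rightarrow> real" where
  "wp n c \<omega> = (\<Sum>S\<in>Pow {..<n}. c S * chi S \<omega>)"

lemma finite_Pow_sub: "S \<in> Pow {..<n::nat} \<Longrightarrow> finite S"
  by (auto intro: finite_subset)

lemma bm_wp[simp]: "bm (wp n c)"
  unfolding wp_def by (intro bm_sum bm_cmult) auto

lemma E_wp_wp: "EE (\<lambda>\<omega>. wp n c \<omega> * wp n e \<omega>) = (\<Sum>S\<in>Pow {..<n}. c S * e S)"
proof -
  have "EE (\<lambda>\<omega>. wp n c \<omega> * wp n e \<omega>) =
      EE (\<lambda>\<omega>. \<Sum>S\<in>Pow {..<n}. \<Sum>T\<in>Pow {..<n}. (c S * e T) * (chi S \<omega> * chi T \<omega>))"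
    unfolding wp_def sum_product by (simp add: algebra_simps)
  also have "\<dots> = (\<Sum>S\<in>Pow {..<n}. \<Sum>T\<in>Pow {..<n}. EE (\<lambda>\<omega>. (c S * e T) * (chi S \<omega> * chi T \<omega>)))"
    by (subst E_sum, simp, intro bm_sum bm_cmult bm_mult, auto)
       (rule sum.cong[OF refl], subst E_sum, auto intro!: bm_cmult bm_mult)
  also have "\<dots> = (\<Sum>S\<in>Pow {..<n}. \<Sum>T\<in>Pow {..<n}. (c S * e T) * (if S = T then 1 else 0))"
    by (intro sum.cong refl) (simp add: E_chi_chi finite_Pow_sub)
  also have "\<dots> = (\<Sum>S\<in>Pow {..<n}. c S * e S)"
  proof (rule sum.cong[OF refl])
    fix S assume "S \<in> Pow {..<n}"
    have "(\<Sum>T\<in>Pow {..<n}. (c S * e T) * (if S = T then 1 else 0)) =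
       (\<Sum>T\<in>Pow {..<n}. if T = S then c S * e S else 0)"
      by (rule sum.cong) auto
    then show "(\<Sum>T\<in>Pow {..<n}. (c S * e T) * (if S = T then 1 else 0)) = c S * e S"
      using \<open>S \<in> Pow {..<n}\<close> by (simp add: sum.delta')
  qed
  finally show ?thesis .
qed

lemma wp_delta0: "wp n (\<lambda>S. if S = {} then 1 else 0) = (\<lambda>_. 1)"
proof
  fix \<omega>
  have "wp n (\<lambda>S. if S = {} then 1 else 0) \<omega> = (\<Sum>S\<in>Pow {..<n}. if S = {} then 1 else 0)"
    unfolding wp_def by (rule sum.cong) auto
  also have "\<dots> = 1" by (simp add: sum.delta')
  finally show "wp n (\<lambda>S. if S = {} then 1 else 0) \<omega> = 1" .
qed

lemma E_wp: "EE (wp n c) = c {}"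
proof -
  have "EE (wp n c) = EE (\<lambda>\<omega>. wp n c \<omega> * wp n (\<lambda>S. if S = {} then 1 else 0) \<omega>)"
    by (simp add: wp_delta0)
  also have "\<dots> = c {}"
  proof -
    have h: "(\<Sum>S\<in>Pow {..<n}. c S * (if S = {} then 1 else 0)) = (\<Sum>S\<in>Pow {..<n}. if S = {} then c {} else 0)"
      by (rule sum.cong) auto
    show ?thesis unfolding E_wp_wp h by (simp add: sum.delta')
  qed
  finally show ?thesis .
qed

definition D :: "nat \<Rightarrow> ((nat \<Rightarrow> bool) \<Rightarrow> real) \<Rightarrow> (nat \<Rightarrow> bool) \<Rightarrow> real" where
  "D k F \<omega> = (F \<omega> - F (flip k \<omega>)) / 2"

lemma bm_D: "bm F \<Longrightarrow> bm (D k F)"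
  unfolding D_def divide_inverse
  by (subst mult.commute, intro bm_cmult bm_diff bm_flip)

lemma D_wp: "D k (wp n c) = wp n (\<lambda>S. if k \<in> S then c S else 0)"
proof
  fix \<omega>
  have "D k (wp n c) \<omega> = (\<Sum>S\<in>Pow {..<n}. c S * ((chi S \<omega> - chi S (flip k \<omega>)) / 2))"
    unfolding D_def wp_def by (simp add: sum_subtractf[symmetric] sum_divide_distrib[symmetric] right_diff_distrib)
  also have "\<dots> = (\<Sum>S\<in>Pow {..<n}. (if k \<in> S then c S else 0) * chi S \<omega>)"
    by (intro sum.cong refl) (auto simp: chi_flip finite_Pow_sub)
  finally show "D k (wp n c) \<omega> = wp n (\<lambda>S. if k \<in> S then c S else 0) \<omega>"
    unfolding wp_def .
qed

lemma quad_disc: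
  fixes a b c :: real
  assumes h: "\<And>t. 0 \<le> c - 2 * t * b + t^2 * a" and a0: "a \<ge> 0"
  shows "b^2 \<le> c * a"
proof (cases "a = 0")
  case True
  show ?thesis
  proof (cases "b = 0")
    case True then show ?thesis using h[of 0] \<open>a = 0\<close> by simp
  next
    case False
    have "0 \<le> c - 2 * ((c+1)/(2*b)) * b" using h[of "(c+1)/(2*b)"] True by simp
    also have "\<dots> = -1" using False by (simp add: field_simps)
    finally show ?thesis by simp
  qed
next
  case False
  with a0 have ap: "a > 0" by simp
  have "0 \<le> c - 2 * (b/a) * b + (b/a)^2 * a" by (rule h)
  also have "\<dots> = c - b^2/a" using ap by (simp add: field_simps power2_eq_square)
  finally have "b^2/a \<le> c" by simp
  then show ?thesis using ap by (simp add: field_simps)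
qed

lemma E_CS:
  assumes X: "bm X" and Y: "bm Y"
  shows "(EE (\<lambda>\<omega>. X \<omega> * Y \<omega>))^2 \<le> EE (\<lambda>\<omega>. (X \<omega>)^2) * EE (\<lambda>\<omega>. (Y \<omega>)^2)"
proof -
  have "(EE (\<lambda>\<omega>. X \<omega> * Y \<omega>))^2 \<le> EE (\<lambda>\<omega>. (X \<omega>)^2) * EE (\<lambda>\<omega>. (Y \<omega>)^2)"
  proof (rule quad_disc)
    show "EE (\<lambda>\<omega>. (Y \<omega>)^2) \<ge> 0" by (rule E_nonneg) simp
  next
    fix t
    have bX2: "bm (\<lambda>\<omega>. (X \<omega>)^2)" using X by (rule bm_pow)
    have bY2: "bm (\<lambda>\<omega>. t^2 * (Y \<omega>)^2)" using Y by (intro bm_cmult bm_pow)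
    have bXY: "bm (\<lambda>\<omega>. 2 * t * (X \<omega> * Y \<omega>))" using X Y by (intro bm_cmult bm_mult)
    have "0 \<le> EE (\<lambda>\<omega>. (X \<omega> - t * Y \<omega>)^2)" by (rule E_nonneg) simp
    also have "(\<lambda>\<omega>. (X \<omega> - t * Y \<omega>)^2) = (\<lambda>\<omega>. ((X \<omega>)^2 - 2 * t * (X \<omega> * Y \<omega>)) + t^2 * (Y \<omega>)^2)"
      by (auto simp: power2_eq_square algebra_simps)
    also have "EE \<dots> = EE (\<lambda>\<omega>. (X \<omega>)^2) - 2 * t * EE (\<lambda>\<omega>. X \<omega> * Y \<omega>) + t^2 * EE (\<lambda>\<omega>. (Y \<omega>)^2)"
      using bX2 bY2 bXY by (simp add: E_add E_diff bm_diff)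
    finally show "0 \<le> EE (\<lambda>\<omega>. (X \<omega>)^2) - 2 * t * EE (\<lambda>\<omega>. X \<omega> * Y \<omega>) + t^2 * EE (\<lambda>\<omega>. (Y \<omega>)^2)" .
  qed
  then show ?thesis .
qed

lemma wp_Suc: "wp (Suc n) c \<omega> = wp n c \<omega> + sg (\<omega> n) * wp n (\<lambda>S. c (insert n S)) \<omega>"
proof -
  have disj: "Pow {..<n} \<inter> insert n ` Pow {..<n} = {}" by auto
  have inj: "inj_on (insert n) (Pow {..<n})"
    proof (rule inj_onI)
    fix S T assume "S \<in> Pow {..<n}" "T \<in> Pow {..<n}" "insert n S = insert n T"
    moreover have "n \<notin> S" "n \<notin> T" using calculation by auto
    ultimately show "S = T" by (simp add: insert_ident)
  qed
  have "wp (Suc n) c \<omega> = (\<Sum>S\<in>Pow {..<n} \<union> insert n ` Pow {..<n}. c S * chi S \<omega>)"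
    unfolding wp_def lessThan_Suc Pow_insert ..
  also have "\<dots> = wp n c \<omega> + (\<Sum>S\<in>insert n ` Pow {..<n}. c S * chi S \<omega>)"
    unfolding wp_def by (rule sum.union_disjoint) (use disj in auto)
  also have "(\<Sum>S\<in>insert n ` Pow {..<n}. c S * chi S \<omega>) = (\<Sum>S\<in>Pow {..<n}. c (insert n S) * chi (insert n S) \<omega>)"
    by (subst sum.reindex[OF inj]) simp
  also have "\<dots> = sg (\<omega> n) * wp n (\<lambda>S. c (insert n S)) \<omega>"
    unfolding wp_def sum_distrib_left
  proof (rule sum.cong[OF refl])
    fix S assume S: "S \<in> Pow {..<n}"
    then have "n \<notin> S" "finite S" by (auto intro: finite_subset)
    then show "c (insert n S) * chi (insert n S) \<omega> = sg (\<omega> n) * (c (insert n S) * chi S \<omega>)"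
      by (simp add: chi_def)
  qed
  finally show ?thesis .
qed

lemma wp_flip_out: "n \<le> k \<Longrightarrow> wp n c (flip k \<omega>) = wp n c \<omega>"
  unfolding wp_def by (intro sum.cong refl) (auto simp: chi_flip finite_Pow_sub)

lemma E_sg_zero:
  assumes G: "bm G" and inv: "\<And>\<omega>. G (flip k \<omega>) = G \<omega>"
  shows "EE (\<lambda>\<omega>. sg (\<omega> k) * G \<omega>) = 0"
proof -
  have bs: "bm (\<lambda>\<omega>. sg (\<omega> k))"
    unfolding bm_def sg_def by (auto intro!: exI[of _ 1])
  have "EE (\<lambda>\<omega>. sg (\<omega> k) * G \<omega>) = EE (\<lambda>\<omega>. sg (flip k \<omega> k) * G (flip k \<omega>))"
    by (rule E_flip[symmetric, where F="\<lambda>\<omega>. sg (\<omega> k) * G \<omega>"]) (intro bm_mult bs G)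
  also have "\<dots> = EE (\<lambda>\<omega>. - (sg (\<omega> k) * G \<omega>))"
  proof -
    have "\<And>\<omega>. sg (flip k \<omega> k) * G (flip k \<omega>) = - (sg (\<omega> k) * G \<omega>)"
      by (simp only: inv) (simp add: flip_def sg_def)
    then show ?thesis by simp
  qed
  finally show ?thesis by simp
qed

lemma hyper:
  fixes r :: real
  assumes r: "0 \<le> r" "3 * r^2 \<le> 1"
  shows "EE (\<lambda>\<omega>. (wp n (\<lambda>S. r ^ card S * c S) \<omega>)^4) \<le> (\<Sum>S\<in>Pow {..<n}. (c S)^2)^2"
proof (induction n arbitrary: c)
  case 0
  then show ?case by (simp add: wp_def)
next
  case (Suc n)
  define c' where "c' = (\<lambda>S. c (insert n S))"
  define A where "A = wp n (\<lambda>S. r ^ card S * c S)"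
  define B where "B = wp n (\<lambda>S. r ^ card S * c' S)"
  define \<alpha> where "\<alpha> = (\<Sum>S\<in>Pow {..<n}. (c S)^2)"
  define \<beta> where "\<beta> = (\<Sum>S\<in>Pow {..<n}. (c' S)^2)"
  have IA: "EE (\<lambda>\<omega>. (A \<omega>)^4) \<le> \<alpha>^2" unfolding A_def \<alpha>_def by (rule Suc.IH)
  have IB: "EE (\<lambda>\<omega>. (B \<omega>)^4) \<le> \<beta>^2" unfolding B_def \<beta>_def by (rule Suc.IH)
  have a0: "\<alpha> \<ge> 0" "\<beta> \<ge> 0" unfolding \<alpha>_def \<beta>_def by (auto intro: sum_nonneg)
  have bA: "bm A" and bB: "bm B" unfolding A_def B_def by simp_all
  have iA: "A (flip n \<omega>) = A \<omega>" and iB: "B (flip n \<omega>) = B \<omega>" for \<omega>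
    unfolding A_def B_def by (simp_all add: wp_flip_out)
  have card_ins: "S \<in> Pow {..<n} \<Longrightarrow> card (insert n S) = Suc (card S)" for S
    by (subst card_insert_disjoint) (auto intro: finite_subset)
  have split: "wp (Suc n) (\<lambda>S. r ^ card S * c S) \<omega> = A \<omega> + sg (\<omega> n) * (r * B \<omega>)" for \<omega>
  proof -
    have "wp n (\<lambda>S. r ^ card (insert n S) * c (insert n S)) \<omega> = r * B \<omega>"
      unfolding B_def wp_def sum_distrib_left c'_def
      by (intro sum.cong refl) (simp add: card_ins)
    then show ?thesis unfolding wp_Suc A_def by simp
  qed
  have sg2: "sg b ^ 2 = 1" "sg b ^ 3 = sg b" "sg b ^ 4 = 1" for b by (simp_all add: sg_def)
  have expand: "(A \<omega> + sg (\<omega> n) * (r * B \<omega>))^4 =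
      (A \<omega>)^4 + 6 * r^2 * ((A \<omega>)^2 * (B \<omega>)^2) + r^4 * (B \<omega>)^4
      + sg (\<omega> n) * (4 * r * ((A \<omega>)^3 * B \<omega>) + 4 * r^3 * (A \<omega> * (B \<omega>)^3))" for \<omega>
  proof -
    have "(A \<omega> + sg (\<omega> n) * (r * B \<omega>))^4 =
      (A \<omega>)^4 + 6 * r^2 * (sg (\<omega> n))^2 * ((A \<omega>)^2 * (B \<omega>)^2) + r^4 * (sg (\<omega> n))^4 * (B \<omega>)^4
      + (4 * r * sg (\<omega> n) * ((A \<omega>)^3 * B \<omega>) + 4 * r^3 * (sg (\<omega> n))^3 * (A \<omega> * (B \<omega>)^3))"
      by (simp add: algebra_simps power2_eq_square power3_eq_cube power4_eq_xxxx)
    then show ?thesis by (simp add: sg2 algebra_simps)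
  qed
  have b1: "bm (\<lambda>\<omega>. (A \<omega>)^4)" "bm (\<lambda>\<omega>. (B \<omega>)^4)" "bm (\<lambda>\<omega>. (A \<omega>)^2 * (B \<omega>)^2)"
    using bA bB by (auto intro: bm_pow bm_mult)
  have b2: "bm (\<lambda>\<omega>. 4 * r * ((A \<omega>)^3 * B \<omega>) + 4 * r^3 * (A \<omega> * (B \<omega>)^3))"
    using bA bB by (intro bm_add bm_cmult bm_mult bm_pow)
  have bsg: "bm (\<lambda>\<omega>. sg (\<omega> n))"
    unfolding bm_def sg_def by (auto intro!: exI[of _ 1])
  have odd: "EE (\<lambda>\<omega>. sg (\<omega> n) * (4 * r * ((A \<omega>)^3 * B \<omega>) + 4 * r^3 * (A \<omega> * (B \<omega>)^3))) = 0"
    by (rule E_sg_zero[OF b2]) (simp add: iA iB)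
  have "EE (\<lambda>\<omega>. (wp (Suc n) (\<lambda>S. r ^ card S * c S) \<omega>)^4) =
     EE (\<lambda>\<omega>. (A \<omega>)^4) + 6 * r^2 * EE (\<lambda>\<omega>. (A \<omega>)^2 * (B \<omega>)^2) + r^4 * EE (\<lambda>\<omega>. (B \<omega>)^4)"
    unfolding split expand
    using b1 b2 bsg odd
    by (simp add: E_add bm_add bm_cmult bm_mult)
  also have "\<dots> \<le> \<alpha>^2 + 2 * (\<alpha> * \<beta>) + \<beta>^2"
  proof -
    have ab0: "0 \<le> EE (\<lambda>\<omega>. (A \<omega>)^2 * (B \<omega>)^2)" by (rule E_nonneg) simp
    have b40: "0 \<le> EE (\<lambda>\<omega>. (B \<omega>)^4)" by (rule E_nonneg) simp
    have "(EE (\<lambda>\<omega>. (A \<omega>)^2 * (B \<omega>)^2))^2 \<le> EE (\<lambda>\<omega>. ((A \<omega>)^2)^2) * EE (\<lambda>\<omega>. ((B \<omega>)^2)^2)"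
      using bA bB by (intro E_CS bm_pow)
    also have "\<dots> \<le> \<alpha>^2 * \<beta>^2"
      using IA IB by (intro mult_mono) (auto simp: power_mult[symmetric] intro!: E_nonneg)
    also have "\<dots> = (\<alpha> * \<beta>)^2" by (simp add: power_mult_distrib)
    finally have "EE (\<lambda>\<omega>. (A \<omega>)^2 * (B \<omega>)^2) \<le> \<alpha> * \<beta>"
      using a0 by (auto intro: power2_le_imp_le)
    moreover have "6 * r^2 \<le> 2" using r by simp
    moreover have "r^4 \<le> 1"
    proof -
      have "r^2 \<le> 1" using r by simp
      then have "r^2 * r^2 \<le> 1 * 1" by (intro mult_mono) auto
      then show ?thesis by (simp add: power4_eq_xxxx power2_eq_square)
    qed
    moreover have "6 * r^2 * EE (\<lambda>\<omega>. (A \<omega>)^2 * (B \<omega>)^2) \<le> 2 * EE (\<lambda>\<omega>. (A \<omega>)^2 * (B \<omega>)^2)"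
      using ab0 \<open>6 * r^2 \<le> 2\<close> by (intro mult_right_mono) auto
    moreover have "r^4 * EE (\<lambda>\<omega>. (B \<omega>)^4) \<le> EE (\<lambda>\<omega>. (B \<omega>)^4)"
      using b40 \<open>r^4 \<le> 1\<close> by (simp add: mult_left_le_one_le)
    ultimately show ?thesis using IA IB by linarith
  qed
  also have "\<dots> = (\<alpha> + \<beta>)^2" by (simp add: power2_eq_square algebra_simps)
  also have "\<alpha> + \<beta> = (\<Sum>S\<in>Pow {..<Suc n}. (c S)^2)"
  proof -
    have disj: "Pow {..<n} \<inter> insert n ` Pow {..<n} = {}" by auto
    have inj: "inj_on (insert n) (Pow {..<n})"
      proof (rule inj_onI)
    fix S T assume "S \<in> Pow {..<n}" "T \<in> Pow {..<n}" "insert n S = insert n T"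
    moreover have "n \<notin> S" "n \<notin> T" using calculation by auto
    ultimately show "S = T" by (simp add: insert_ident)
  qed
    show ?thesis unfolding lessThan_Suc Pow_insert \<alpha>_def \<beta>_def c'_def
      by (subst sum.union_disjoint) (use disj in \<open>auto simp: sum.reindex[OF inj]\<close>)
  qed
  finally show ?case .
qed

lemma one_le_aux:
  fixes d :: real and m :: nat
  assumes d: "d > 0" and m: "m \<ge> 1"
  shows "1 \<le> real m * (1/d + 3 powr d * (1/3)^m)"
proof -
  have p: "0 \<le> 3 powr d * (1/3::real)^m" by simp
  show ?thesis
  proof (cases "real m \<ge> d")
    case True
    have "1 \<le> real m / d" using True d by simp
    also have "\<dots> = real m * (1/d)" by simp
    also have "\<dots> \<le> real m * (1/d + 3 powr d * (1/3)^m)"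
      using p by (intro mult_left_mono) auto
    finally show ?thesis .
  next
    case False
    have e1: "3 powr (d - real m) = 3 powr d / 3 ^ m" by (simp add: powr_diff powr_realpow)
    have e2: "(1/3::real)^m = 1 / 3^m" by (simp add: power_one_over)
    have "3 powr d * (1/3)^m = 3 powr (d - real m)" unfolding e1 e2 by simp
    also have "\<dots> \<ge> 1" using False by (intro ge_one_powr_ge_zero) auto
    finally have h: "1 \<le> 3 powr d * (1/3)^m" .
    have m1: "1 \<le> real m" using m by simp
    have "1 * 1 \<le> real m * (3 powr d * (1/3)^m)"
      by (rule mult_mono[OF m1 h]) auto
    also have "\<dots> \<le> real m * (1/d + 3 powr d * (1/3)^m)" using d by (intro mult_left_mono) auto
    finally show ?thesis by simp
  qed
qed

lemma card_as_sum: "S \<subseteq> {..<n::nat} \<Longrightarrow> real (card S) = (\<Sum>k<n. if k \<in> S then 1 else 0)"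
proof -
  assume S: "S \<subseteq> {..<n}"
  have "(\<Sum>k<n. if k \<in> S then 1 else 0 :: real) = (\<Sum>k\<in>{..<n} \<inter> S. 1)"
    by (rule sum.inter_restrict[symmetric]) simp
  also have "{..<n} \<inter> S = S" using S by auto
  finally show ?thesis by simp
qed

lemma card_mult_as_sum: "S \<subseteq> {..<n::nat} \<Longrightarrow> real (card S) * X = (\<Sum>k<n. if k \<in> S then X else 0)"
proof -
  assume S: "S \<subseteq> {..<n}"
  have "real (card S) * X = (\<Sum>k<n. (if k \<in> S then 1 else 0) * X)"
    by (simp only: card_as_sum[OF S] sum_distrib_right)
  also have "\<dots> = (\<Sum>k<n. if k \<in> S then X else 0)"
    by (rule sum.cong) auto
  finally show ?thesis .
qed

lemma coef_bound:
  fixes d :: real and c :: "nat set \<Rightarrow> real"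
  assumes d: "d > 0"
  shows "(\<Sum>S\<in>Pow {..<n} - {{}}. (c S)^2) \<le>
    (\<Sum>k<n. (1/d) * (\<Sum>S\<in>Pow {..<n}. if k \<in> S then (c S)^2 else 0)
       + 3 powr d * (\<Sum>S\<in>Pow {..<n}. if k \<in> S then (1/3)^card S * (c S)^2 else 0))"
proof -
  let ?x = "\<lambda>S. (c S)^2 * (1/d + 3 powr d * (1/3)^card S)"
  have "(\<Sum>S\<in>Pow {..<n} - {{}}. (c S)^2) \<le> (\<Sum>S\<in>Pow {..<n} - {{}}. real (card S) * ?x S)"
  proof (rule sum_mono)
    fix S assume S: "S \<in> Pow {..<n} - {{}}"
    then have "card S \<ge> 1" using finite_Pow_sub[of S n]
      by (metis Diff_iff One_nat_def Suc_leI card_gt_0_iff singletonI)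
    then have "1 \<le> real (card S) * (1/d + 3 powr d * (1/3)^card S)" by (rule one_le_aux[OF d])
    then have "(c S)^2 * 1 \<le> (c S)^2 * (real (card S) * (1/d + 3 powr d * (1/3)^card S))"
      by (intro mult_left_mono) auto
    then show "(c S)^2 \<le> real (card S) * ?x S" by (simp add: algebra_simps)
  qed
  also have "\<dots> = (\<Sum>S\<in>Pow {..<n}. real (card S) * ?x S)"
    by (rule sum.mono_neutral_left) auto
  also have "\<dots> = (\<Sum>S\<in>Pow {..<n}. \<Sum>k<n. if k \<in> S then ?x S else 0)"
    by (intro sum.cong refl) (auto simp: card_mult_as_sum)
  also have "\<dots> = (\<Sum>k<n. \<Sum>S\<in>Pow {..<n}. if k \<in> S then ?x S else 0)"
    by (rule sum.swap)
  also have "\<dots> = (\<Sum>k<n. (1/d) * (\<Sum>S\<in>Pow {..<n}. if k \<in> S then (c S)^2 else 0)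
       + 3 powr d * (\<Sum>S\<in>Pow {..<n}. if k \<in> S then (1/3)^card S * (c S)^2 else 0))"
    by (intro sum.cong refl) (auto simp: sum_distrib_left sum.distrib[symmetric] algebra_simps intro!: sum.cong)
  finally show ?thesis .
qed

lemma var_wp: "EE (\<lambda>\<omega>. (wp n c \<omega>)^2) - (EE (wp n c))^2 = (\<Sum>S\<in>Pow {..<n} - {{}}. (c S)^2)"
proof -
  have "EE (\<lambda>\<omega>. (wp n c \<omega>)^2) = (\<Sum>S\<in>Pow {..<n}. (c S)^2)"
    using E_wp_wp[of n c c] by (simp add: power2_eq_square)
  also have "\<dots> = (c {})^2 + (\<Sum>S\<in>Pow {..<n} - {{}}. (c S)^2)"
    by (subst sum.remove[of _ "{}"]) auto
  finally show ?thesis by (simp add: E_wp)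
qed

lemma a_wp: "EE (\<lambda>\<omega>. (D k (wp n c) \<omega>)^2) = (\<Sum>S\<in>Pow {..<n}. if k \<in> S then (c S)^2 else 0)"
  unfolding D_wp using E_wp_wp[of n "\<lambda>S. if k \<in> S then c S else 0" "\<lambda>S. if k \<in> S then c S else 0"]
  by (simp add: power2_eq_square if_distrib cong: if_cong)

definition uq :: "nat \<Rightarrow> nat \<Rightarrow> (nat set \<Rightarrow> real) \<Rightarrow> (nat \<Rightarrow> bool) \<Rightarrow> real" where
  "uq n k c = wp n (\<lambda>S. if k \<in> S then (1/3)^card S * c S else 0)"

lemma q_wp: "EE (\<lambda>\<omega>. D k (wp n c) \<omega> * uq n k c \<omega>) =
    (\<Sum>S\<in>Pow {..<n}. if k \<in> S then (1/3)^card S * (c S)^2 else 0)"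
  unfolding D_wp uq_def E_wp_wp
  by (intro sum.cong refl) (simp add: power2_eq_square)

lemma bm_uq[simp]: "bm (uq n k c)" unfolding uq_def by simp

lemma uq_hyper: "EE (\<lambda>\<omega>. (uq n k c \<omega>)^4) \<le>
    (\<Sum>S\<in>Pow {..<n}. if k \<in> S then (1/3)^card S * (c S)^2 else 0)^2"
proof -
  define r :: real where "r = sqrt (1/3)"
  have r: "0 \<le> r" "3 * r^2 \<le> 1" unfolding r_def by simp_all
  have r2: "r^2 = 1/3" unfolding r_def by simp
  have rr: "r ^ m * r ^ m = (1/3)^m" for m
    by (metis power_mult_distrib r2 power2_eq_square)
  define e where "e = (\<lambda>S. if k \<in> S then r ^ card S * c S else 0)"
  have "uq n k c = wp n (\<lambda>S. r ^ card S * e S)"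
    unfolding uq_def e_def by (intro arg_cong[where f="wp n"] ext) (simp add: rr mult.assoc[symmetric])
  then have "EE (\<lambda>\<omega>. (uq n k c \<omega>)^4) \<le> (\<Sum>S\<in>Pow {..<n}. (e S)^2)^2"
    using hyper[OF r, of n e] by simp
  also have "(\<Sum>S\<in>Pow {..<n}. (e S)^2) = (\<Sum>S\<in>Pow {..<n}. if k \<in> S then (1/3)^card S * (c S)^2 else 0)"
    unfolding e_def by (intro sum.cong refl) (simp add: power_mult_distrib rr[symmetric] power2_eq_square)
  finally show ?thesis .
qed

interpretation PP: pair_prob_space cube cube
  by (simp add: pair_prob_space_def pair_sigma_finite_def prob_cube prob_space_imp_sigma_finite)

definition cex :: "nat \<Rightarrow> ((nat \<Rightarrow> bool) \<Rightarrow> real) \<Rightarrow> (nat \<Rightarrow> bool) \<Rightarrow> real" where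
  "cex n F \<omega> = (\<integral>\<eta>. F (comb_seq n \<omega> \<eta>) \<partial>cube)"

lemma meas_comb: "(\<lambda>(\<omega>, \<eta>). comb_seq n \<omega> \<eta>) \<in> measurable (cube \<Otimes>\<^sub>M cube) cube"
  unfolding cube_def by (rule measurable_comb_seq)

lemma meas_comb1: "comb_seq n \<omega> \<in> measurable cube cube"
  unfolding cube_def
  by (rule measurable_comb_seq'[OF measurable_const measurable_ident_sets]) (auto simp: space_PiM)

lemma distr_comb: "distr (cube \<Otimes>\<^sub>M cube) cube (\<lambda>(\<omega>, \<eta>). comb_seq n \<omega> \<eta>) = cube"
  unfolding cube_S by (rule C.PiM_comb_seq)

lemma abs_E_le: "bm G \<Longrightarrow> (\<And>\<omega>. \<bar>G \<omega>\<bar> \<le> B) \<Longrightarrow> \<bar>EE G\<bar> \<le> B"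
proof -
  assume G: "bm G" and b: "\<And>\<omega>. \<bar>G \<omega>\<bar> \<le> B"
  have l: "-B \<le> G \<omega>" "G \<omega> \<le> B" for \<omega> using b[of \<omega>] abs_le_D2[of "G \<omega>" B] abs_le_D1[of "G \<omega>" B] by linarith+
  have "EE G \<le> EE (\<lambda>_. B)" using l by (intro E_mono G) auto
  moreover have "EE (\<lambda>_. -B) \<le> EE G" using l by (intro E_mono G) auto
  ultimately show ?thesis by simp
qed

lemma bm_comb: "bm F \<Longrightarrow> bm (\<lambda>\<eta>. F (comb_seq n \<omega> \<eta>))"
  unfolding bm_def using meas_comb1 by (auto intro: measurable_compose)

lemma meas_pair: "bm F \<Longrightarrow> (\<lambda>p. F (case p of (\<omega>, \<eta>) \<Rightarrow> comb_seq n \<omega> \<eta>)) \<in> borel_measurable (cube \<Otimes>\<^sub>M cube)"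
  using measurable_compose[OF meas_comb bm_meas] by simp

lemma bm_cex: "bm F \<Longrightarrow> bm (cex n F)"
proof -
  assume F: "bm F"
  then obtain B where B: "\<And>\<omega>. \<bar>F \<omega>\<bar> \<le> B" unfolding bm_def by auto
  have m: "(\<lambda>(\<omega>, \<eta>). F (comb_seq n \<omega> \<eta>)) \<in> borel_measurable (cube \<Otimes>\<^sub>M cube)"
    using meas_pair[OF F] by (simp add: case_prod_beta)
  have "cex n F \<in> borel_measurable cube"
    unfolding cex_def by (rule PC.borel_measurable_lebesgue_integral[OF m])
  moreover have "\<bar>cex n F \<omega>\<bar> \<le> B" for \<omega>
    unfolding cex_def by (rule abs_E_le[OF bm_comb[OF F]]) (rule B)
  ultimately show ?thesis unfolding bm_def by auto
qed

lemma E_pair: "bm G \<Longrightarrow> EE G = EE (cex n G)"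
proof -
  assume G: "bm G"
  then obtain B where B: "\<And>\<omega>. \<bar>G \<omega>\<bar> \<le> B" unfolding bm_def by auto
  have int: "integrable (cube \<Otimes>\<^sub>M cube) (\<lambda>p. G (case p of (\<omega>, \<eta>) \<Rightarrow> comb_seq n \<omega> \<eta>))"
    using B meas_pair[OF G] by (intro PP.integrable_const_bound[where B=B] AE_I2) auto
  have "EE G = integral\<^sup>L (distr (cube \<Otimes>\<^sub>M cube) cube (\<lambda>(\<omega>, \<eta>). comb_seq n \<omega> \<eta>)) G"
    by (simp add: distr_comb)
  also have "\<dots> = integral\<^sup>L (cube \<Otimes>\<^sub>M cube) (\<lambda>p. G (case p of (\<omega>, \<eta>) \<Rightarrow> comb_seq n \<omega> \<eta>))"
    by (rule integral_distr[OF meas_comb]) (use bm_meas[OF G] in simp)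
  also have "\<dots> = (\<integral>\<omega>. (\<integral>\<eta>. G (comb_seq n \<omega> \<eta>) \<partial>cube) \<partial>cube)"
    using PP.integral_fst'[OF int] by simp
  finally show ?thesis unfolding cex_def .
qed

lemma comb_agree: "(\<And>i. i < n \<Longrightarrow> \<omega> i = \<omega>' i) \<Longrightarrow> comb_seq n \<omega> \<eta> = comb_seq n \<omega>' \<eta>"
  by (rule ext) (simp add: comb_seq_def)

lemma comb_low: "i < n \<Longrightarrow> comb_seq n \<omega> \<eta> i = \<omega> i"
  by (simp add: comb_seq_def)

lemma cex_dep: assumes "\<And>i. i < n \<Longrightarrow> \<omega> i = \<omega>' i" shows "cex n F \<omega> = cex n F \<omega>'"
  unfolding cex_def using comb_agree[of n \<omega> \<omega>', OF assms] by simp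

definition dep :: "nat \<Rightarrow> ((nat \<Rightarrow> bool) \<Rightarrow> real) \<Rightarrow> bool" where
  "dep n U \<longleftrightarrow> (\<forall>\<omega> \<omega>'. (\<forall>i<n. \<omega> i = \<omega>' i) \<longrightarrow> U \<omega> = U \<omega>')"

lemma dep_cex: "dep n (cex n F)"
  unfolding dep_def by (auto intro: cex_dep)

lemma tower:
  assumes F: "bm F" and U: "bm U" and d: "dep n U"
  shows "EE (\<lambda>\<omega>. cex n F \<omega> * U \<omega>) = EE (\<lambda>\<omega>. F \<omega> * U \<omega>)"
proof -
  have "cex n F \<omega> * U \<omega> = cex n (\<lambda>\<omega>. F \<omega> * U \<omega>) \<omega>" for \<omega>
  proof -
    have "U (comb_seq n \<omega> \<eta>) = U \<omega>" for \<eta>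
      using d unfolding dep_def by (auto simp: comb_low)
    then show ?thesis unfolding cex_def by simp
  qed
  then have "EE (\<lambda>\<omega>. cex n F \<omega> * U \<omega>) = EE (cex n (\<lambda>\<omega>. F \<omega> * U \<omega>))" by simp
  also have "\<dots> = EE (\<lambda>\<omega>. F \<omega> * U \<omega>)"
    by (rule E_pair[symmetric]) (intro bm_mult F U)
  finally show ?thesis .
qed

lemma E_cex: "bm F \<Longrightarrow> EE (cex n F) = EE F"
  by (rule E_pair[symmetric])

lemma comb_flip: "k < n \<Longrightarrow> comb_seq n (flip k \<omega>) \<eta> = flip k (comb_seq n \<omega> \<eta>)"
  by (rule ext) (simp add: comb_seq_def flip_def)

lemma cex_D: assumes k: "k < n" and F: "bm F" shows "D k (cex n F) = cex n (D k F)"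
proof
  fix \<omega>
  have i1: "integrable cube (\<lambda>\<eta>. F (comb_seq n \<omega> \<eta>))" by (rule bm_int[OF bm_comb[OF F]])
  have i2: "integrable cube (\<lambda>\<eta>. F (flip k (comb_seq n \<omega> \<eta>)))"
    by (rule bm_int[OF bm_comb[OF bm_flip[OF F]]])
  have "D k (cex n F) \<omega> = ((\<integral>\<eta>. F (comb_seq n \<omega> \<eta>) \<partial>cube) - (\<integral>\<eta>. F (flip k (comb_seq n \<omega> \<eta>)) \<partial>cube)) / 2"
    unfolding D_def cex_def using k by (simp add: comb_flip)
  also have "\<dots> = (\<integral>\<eta>. (F (comb_seq n \<omega> \<eta>) - F (flip k (comb_seq n \<omega> \<eta>))) / 2 \<partial>cube)"
    using i1 i2 by simp
  also have "\<dots> = cex n (D k F) \<omega>" unfolding cex_def D_def ..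
  finally show "D k (cex n F) \<omega> = cex n (D k F) \<omega>" .
qed

definition pt :: "nat set \<Rightarrow> nat \<Rightarrow> bool" where "pt T = (\<lambda>i. i \<in> T)"

lemma factor_ind: "(1 + sg a * sg b) / 2 = (if a = b then 1 else (0::real))"
  by (simp add: sg_def)

lemma ind_prod: "(\<Prod>i<n. (1 + sg (\<omega> i) * sg (pt T i)) / 2) = (if \<forall>i<n. \<omega> i = (i \<in> T) then 1 else (0::real))"
proof (cases "\<forall>i<n. \<omega> i = (i \<in> T)")
  case True
  then have "(\<Prod>i<n. (1 + sg (\<omega> i) * sg (pt T i)) / 2) = (\<Prod>i<n. (1::real))"
    by (intro prod.cong refl) (simp add: factor_ind pt_def)
  then show ?thesis using True by simp
next
  case False
  then obtain j where j: "j < n" "\<omega> j \<noteq> (j \<in> T)" by auto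
  have z: "(\<Prod>i<n. (1 + sg (\<omega> i) * sg (pt T i)) / 2) = 0"
    using j by (intro prod_zero) (auto simp: factor_ind pt_def intro!: bexI[of _ j])
  have z2: "(if \<forall>i<n. \<omega> i = (i \<in> T) then 1 else (0::real)) = 0" using False by auto
  show ?thesis by (simp only: z z2)
qed

lemma ind_expand: "(\<Prod>i<n. (1 + sg (\<omega> i) * sg (pt T i)) / 2) =
   (\<Sum>X\<in>Pow {..<n}. (1/2)^n * chi X (pt T) * chi X \<omega>)"
proof -
  have "(\<Prod>i<n. (1 + sg (\<omega> i) * sg (pt T i)) / 2) = (\<Prod>i<n. sg (\<omega> i) * sg (pt T i) / 2 + 1/2)"
    by (intro prod.cong refl) (simp add: add_divide_distrib)
  also have "\<dots> = (\<Sum>X\<in>Pow {..<n}. (\<Prod>i\<in>X. sg (\<omega> i) * sg (pt T i) / 2) * (\<Prod>i\<in>{..<n} - X. 1/2))"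
    by (rule prod_add) simp
  also have "\<dots> = (\<Sum>X\<in>Pow {..<n}. (1/2)^n * chi X (pt T) * chi X \<omega>)"
  proof (rule sum.cong[OF refl])
    fix X assume X: "X \<in> Pow {..<n}"
    then have fX: "finite X" by (rule finite_Pow_sub)
    have cX: "card ({..<n} - X) = n - card X" using X by (subst card_Diff_subset) (auto simp: fX)
    have cle: "card X \<le> n" using X by (metis PowD card_lessThan card_mono finite_lessThan)
    have "(\<Prod>i\<in>X. sg (\<omega> i) * sg (pt T i) / 2) = chi X \<omega> * chi X (pt T) * (1/2)^card X"
      unfolding chi_def by (simp add: prod.distrib prod_dividef power_one_over)
    moreover have "(\<Prod>i\<in>{..<n} - X. 1/2::real) = (1/2)^(n - card X)"
      by (simp add: cX)
    moreover have "(1/2::real)^card X * (1/2)^(n - card X) = (1/2)^n"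
      using cle by (simp add: power_add[symmetric])
    ultimately show "(\<Prod>i\<in>X. sg (\<omega> i) * sg (pt T i) / 2) * (\<Prod>i\<in>{..<n} - X. 1/2) =
        (1/2)^n * chi X (pt T) * chi X \<omega>"
      by (metis (no_types, lifting) mult.assoc mult.commute)
  qed
  finally show ?thesis .
qed

lemma expansion:
  assumes d: "dep n W"
  shows "W = wp n (\<lambda>X. \<Sum>T\<in>Pow {..<n}. W (pt T) * ((1/2)^n * chi X (pt T)))"
proof
  fix \<omega>
  define T0 where "T0 = {i. i < n \<and> \<omega> i}"
  have T0: "T0 \<in> Pow {..<n}" unfolding T0_def by auto
  have "W \<omega> = W (pt T0)"
    using d unfolding dep_def T0_def pt_def by auto
  also have "\<dots> = (\<Sum>T\<in>Pow {..<n}. W (pt T) * (if \<forall>i<n. \<omega> i = (i \<in> T) then 1 else 0))"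
  proof -
    have eq: "T \<in> Pow {..<n} \<Longrightarrow> (\<forall>i<n. \<omega> i = (i \<in> T)) \<longleftrightarrow> T = T0" for T
      unfolding T0_def by auto
    have "(\<Sum>T\<in>Pow {..<n}. W (pt T) * (if \<forall>i<n. \<omega> i = (i \<in> T) then 1 else 0))
        = (\<Sum>T\<in>Pow {..<n}. if T = T0 then W (pt T0) else 0)"
      by (intro sum.cong refl) (simp add: eq)
    also have "\<dots> = W (pt T0)" using T0 by (simp add: sum.delta')
    finally show ?thesis by simp
  qed
  also have "\<dots> = (\<Sum>T\<in>Pow {..<n}. \<Sum>X\<in>Pow {..<n}. W (pt T) * ((1/2)^n * chi X (pt T) * chi X \<omega>))"
    by (intro sum.cong refl) (simp add: ind_prod[symmetric] ind_expand sum_distrib_left)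
  also have "\<dots> = (\<Sum>X\<in>Pow {..<n}. \<Sum>T\<in>Pow {..<n}. W (pt T) * ((1/2)^n * chi X (pt T) * chi X \<omega>))"
    by (rule sum.swap)
  also have "\<dots> = wp n (\<lambda>X. \<Sum>T\<in>Pow {..<n}. W (pt T) * ((1/2)^n * chi X (pt T))) \<omega>"
    unfolding wp_def by (intro sum.cong refl) (simp add: sum_distrib_right mult.assoc)
  finally show "W \<omega> = wp n (\<lambda>X. \<Sum>T\<in>Pow {..<n}. W (pt T) * ((1/2)^n * chi X (pt T))) \<omega>" .
qed

lemma dep_wp_ex: "dep n W \<Longrightarrow> \<exists>c. W = wp n c"
  using expansion by blast

abbreviation ind :: "(nat \<Rightarrow> bool) set \<Rightarrow> (nat \<Rightarrow> bool) \<Rightarrow> real" where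
  "ind A \<equiv> (\<lambda>\<omega>. indicator A \<omega>)"

lemma bm_ind: "A \<in> sets cube \<Longrightarrow> bm (ind A)"
  unfolding bm_def by (auto intro!: exI[of _ 1] simp: indicator_def)

lemma bm_abs: "bm F \<Longrightarrow> bm (\<lambda>\<omega>. \<bar>F \<omega>\<bar>)"
  unfolding bm_def by auto

definition err :: "nat \<Rightarrow> (nat \<Rightarrow> bool) set \<Rightarrow> real" where
  "err n A = EE (\<lambda>\<omega>. \<bar>cex n (ind A) \<omega> - ind A \<omega>\<bar>)"

lemma cex_nonneg: "bm F \<Longrightarrow> (\<And>\<omega>. 0 \<le> F \<omega>) \<Longrightarrow> 0 \<le> cex n F \<omega>"
  unfolding cex_def by (rule E_nonneg) simp

lemma cex_add: "bm F \<Longrightarrow> bm G \<Longrightarrow> cex n (\<lambda>\<omega>. F \<omega> + G \<omega>) \<omega> = cex n F \<omega> + cex n G \<omega>"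
  unfolding cex_def by (intro E_add bm_comb)

lemma cex_diff: "bm F \<Longrightarrow> bm G \<Longrightarrow> cex n (\<lambda>\<omega>. F \<omega> - G \<omega>) \<omega> = cex n F \<omega> - cex n G \<omega>"
  unfolding cex_def by (intro E_diff bm_comb)

lemma cex_sum: "finite I \<Longrightarrow> (\<And>i. i \<in> I \<Longrightarrow> bm (F i)) \<Longrightarrow>
   cex n (\<lambda>\<omega>. \<Sum>i\<in>I. F i \<omega>) \<omega> = (\<Sum>i\<in>I. cex n (F i) \<omega>)"
  unfolding cex_def by (intro E_sum bm_comb) auto

lemma cex_const[simp]: "cex n (\<lambda>_. c) \<omega> = c"
  unfolding cex_def by simp

lemma err_nonneg: "0 \<le> err n A"
  unfolding err_def by (rule E_nonneg) simp

lemma sets_cube_sigma: "sets cube = sigma_sets UNIV (prod_algebra UNIV (\<lambda>_. BB))"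
  unfolding cube_def sets_PiM by (simp add: PiE_UNIV_domain)

lemma err_basic:
  assumes A: "A \<in> prod_algebra UNIV (\<lambda>_. BB)"
  shows "(\<lambda>n. err n A) \<longlonglongrightarrow> 0"
proof -
  from prod_algebraE[OF A] obtain J E where AJ: "A = prod_emb UNIV (\<lambda>_. BB) J (Pi\<^sub>E J E)" "finite J"
    by metis
  have Aeq: "A = {\<omega>. \<forall>i\<in>J. \<omega> i \<in> E i}" unfolding AJ(1) prod_emb_cube ..
  define N where "N = Suc (Max (insert 0 J))"
  have JN: "i \<in> J \<Longrightarrow> i < N" for i unfolding N_def using AJ(2)
    by (simp add: le_imp_less_Suc)
  have "err n A = 0" if n: "n \<ge> N" for n
  proof -
    have "cex n (ind A) \<omega> = ind A \<omega>" for \<omega>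
    proof -
      have "ind A (comb_seq n \<omega> \<eta>) = ind A \<omega>" for \<eta>
      proof -
        have "i \<in> J \<Longrightarrow> comb_seq n \<omega> \<eta> i = \<omega> i" for i
          using JN[of i] n by (simp add: comb_low)
        then have "(comb_seq n \<omega> \<eta> \<in> A) = (\<omega> \<in> A)" unfolding Aeq by auto
        then show ?thesis by (simp add: indicator_def)
      qed
      then show ?thesis unfolding cex_def by simp
    qed
    then show ?thesis unfolding err_def by simp
  qed
  then show ?thesis
    by (intro tendsto_eventually eventually_sequentiallyI[of N]) auto
qed

lemma err_compl:
  assumes A: "A \<in> sets cube"
  shows "err n (UNIV - A) = err n A"
proof -
  have i: "ind (UNIV - A) = (\<lambda>\<omega>. 1 - ind A \<omega>)" by (auto simp: indicator_def)
  have "cex n (ind (UNIV - A)) \<omega> = 1 - cex n (ind A) \<omega>" for \<omega>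
    unfolding i by (subst cex_diff) (auto intro: bm_ind A)
  then show ?thesis unfolding err_def by (simp add: i abs_minus_commute)
qed

lemma ind_split:
  fixes A :: "nat \<Rightarrow> (nat \<Rightarrow> bool) set"
  assumes dis: "disjoint_family A"
  shows "ind (\<Union>i. A i) \<omega> = (\<Sum>i<N. ind (A i) \<omega>) + ind (\<Union>i\<in>{N..}. A i) \<omega>"
proof (cases "\<exists>j. \<omega> \<in> A j")
  case False
  then show ?thesis by (simp add: indicator_def)
next
  case True
  then obtain j where j: "\<omega> \<in> A j" by auto
  have uniq: "\<omega> \<in> A i \<longleftrightarrow> i = j" for i
    using dis j unfolding disjoint_family_on_def by blast
  show ?thesis
  proof (cases "j < N")
    case True
    have "(\<Sum>i<N. ind (A i) \<omega>) = (\<Sum>i<N. if i = j then 1 else 0)"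
      by (intro sum.cong refl) (simp add: indicator_def uniq)
    also have "\<dots> = 1" using True by (simp add: sum.delta)
    finally show ?thesis using True j uniq by (auto simp: indicator_def)
  next
    case False
    have "(\<Sum>i<N. ind (A i) \<omega>) = 0"
      using False by (intro sum.neutral) (auto simp: indicator_def uniq)
    then show ?thesis using False j uniq by (auto simp: indicator_def)
  qed
qed

lemma err_union:
  fixes A :: "nat \<Rightarrow> (nat \<Rightarrow> bool) set"
  assumes dis: "disjoint_family A" and As: "\<And>i. A i \<in> sets cube"
    and lim: "\<And>i. (\<lambda>n. err n (A i)) \<longlonglongrightarrow> 0"
  shows "(\<lambda>n. err n (\<Union>i. A i)) \<longlonglongrightarrow> 0"
proof (rule LIMSEQ_I)
  fix r :: real assume r: "0 < r"
  define T where "T N = (\<Union>i\<in>{N..}. A i)" for N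
  have Ts: "T N \<in> sets cube" for N unfolding T_def using As by auto
  have "(\<lambda>N. measure cube (T N)) \<longlonglongrightarrow> measure cube (\<Inter>N. T N)"
  proof (rule PC.finite_Lim_measure_decseq)
    show "range T \<subseteq> sets cube" using Ts by auto
    show "decseq T" unfolding decseq_def T_def
      by (auto intro: order_trans) 
  qed
  moreover have "(\<Inter>N. T N) = {}"
  proof -
    have "\<omega> \<notin> T (Suc j)" if "\<omega> \<in> A j" for \<omega> j
    proof
      assume "\<omega> \<in> T (Suc j)"
      then obtain x where x: "x \<ge> Suc j" "\<omega> \<in> A x" unfolding T_def by auto
      then have "x \<noteq> j" by simp
      then have "A x \<inter> A j = {}" using dis unfolding disjoint_family_on_def by auto
      then show False using x that by auto
    qed
    note nt = this
    show ?thesis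
    proof (rule equals0I)
      fix \<omega> assume w: "\<omega> \<in> (\<Inter>N. T N)"
      then have "\<omega> \<in> T 0" by simp
      then obtain j where "\<omega> \<in> A j" unfolding T_def by auto
      moreover have "\<omega> \<in> T (Suc j)" using w by simp
      ultimately show False using nt by blast
    qed
  qed
  ultimately have "(\<lambda>N. measure cube (T N)) \<longlonglongrightarrow> 0" by simp
  from LIMSEQ_D[OF this, of "r/4"] r obtain N where "\<forall>n\<ge>N. norm (measure cube (T n) - 0) < r/4"
    by auto
  then have N: "measure cube (T N) < r / 4" by auto
  have "(\<lambda>n. \<Sum>i<N. err n (A i)) \<longlonglongrightarrow> (\<Sum>i<N. 0)"
    by (intro tendsto_sum lim)
  then have "(\<lambda>n. \<Sum>i<N. err n (A i)) \<longlonglongrightarrow> 0" by simp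
  from LIMSEQ_D[OF this, of "r/2"] r obtain n0 where n0': "\<forall>n\<ge>n0. norm ((\<Sum>i<N. err n (A i)) - 0) < r/2"
    by auto
  have n0: "\<And>n. n \<ge> n0 \<Longrightarrow> (\<Sum>i<N. err n (A i)) < r / 2" using n0' by auto
  show "\<exists>no. \<forall>n\<ge>no. norm (err n (\<Union>i. A i) - 0) < r"
  proof (intro exI allI impI)
    fix n assume n: "n \<ge> n0"
    have bA: "bm (ind (A i))" for i using As by (rule bm_ind)
    have bT: "bm (ind (T N))" using Ts by (rule bm_ind)
    have bU: "bm (\<lambda>\<omega>. \<bar>cex n (ind (A i)) \<omega> - ind (A i) \<omega>\<bar>)" for i
      using bA by (intro bm_diff bm_cex bm_abs) auto
    have pw: "\<bar>cex n (ind (\<Union>i. A i)) \<omega> - ind (\<Union>i. A i) \<omega>\<bar>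
        \<le> (\<Sum>i<N. \<bar>cex n (ind (A i)) \<omega> - ind (A i) \<omega>\<bar>) + (cex n (ind (T N)) \<omega> + ind (T N) \<omega>)" for \<omega>
    proof -
      have split: "ind (\<Union>i. A i) = (\<lambda>\<omega>. (\<Sum>i<N. ind (A i) \<omega>) + ind (T N) \<omega>)"
        using ind_split[OF dis] unfolding T_def by auto
      have "cex n (ind (\<Union>i. A i)) \<omega> = (\<Sum>i<N. cex n (ind (A i)) \<omega>) + cex n (ind (T N)) \<omega>"
        unfolding split using bA bT by (simp add: cex_add cex_sum bm_sum)
      then have "cex n (ind (\<Union>i. A i)) \<omega> - ind (\<Union>i. A i) \<omega> =
          (\<Sum>i<N. cex n (ind (A i)) \<omega> - ind (A i) \<omega>) + (cex n (ind (T N)) \<omega> - ind (T N) \<omega>)"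
        unfolding split by (simp add: sum_subtractf)
      moreover have "\<bar>\<Sum>i<N. cex n (ind (A i)) \<omega> - ind (A i) \<omega>\<bar> \<le> (\<Sum>i<N. \<bar>cex n (ind (A i)) \<omega> - ind (A i) \<omega>\<bar>)"
        by (rule sum_abs)
      moreover have "0 \<le> cex n (ind (T N)) \<omega>" by (rule cex_nonneg[OF bT]) simp
      moreover have "0 \<le> ind (T N) \<omega>" by simp
      ultimately show ?thesis by linarith
    qed
    have "err n (\<Union>i. A i) \<le> EE (\<lambda>\<omega>. (\<Sum>i<N. \<bar>cex n (ind (A i)) \<omega> - ind (A i) \<omega>\<bar>) + (cex n (ind (T N)) \<omega> + ind (T N) \<omega>))"
      unfolding err_def using pw
      by (intro E_mono bm_add bm_sum bm_cex bU bT bm_abs bm_diff bm_ind) (auto intro: As)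
    also have "\<dots> = (\<Sum>i<N. err n (A i)) + 2 * measure cube (T N)"
    proof -
      have "EE (ind (T N)) = measure cube (T N)" using Ts by simp
      then show ?thesis unfolding err_def using bU bT
        by (simp add: E_add E_sum bm_sum bm_add bm_cex E_cex)
    qed
    also have "\<dots> < r / 2 + 2 * (r / 4)" using n0[OF n] N by linarith
    finally have "err n (\<Union>i. A i) < r" by simp
    then show "norm (err n (\<Union>i. A i) - 0) < r" using err_nonneg[of n "\<Union>i. A i"] by simp
  qed
qed

lemma err_lim:
  assumes A: "A \<in> sets cube"
  shows "(\<lambda>n. err n A) \<longlonglongrightarrow> 0"
proof -
  have st: "Int_stable (prod_algebra UNIV (\<lambda>_. BB))" by (rule Int_stable_prod_algebra)
  have sp: "prod_algebra UNIV (\<lambda>_. BB) \<subseteq> Pow UNIV" by simp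
  have "A \<in> sigma_sets UNIV (prod_algebra UNIV (\<lambda>_. BB))" using A sets_cube_sigma by simp
  from st sp this show ?thesis
proof (induction rule: sigma_sets_induct_disjoint)
  case (basic A) then show ?case by (rule err_basic)
next
  case empty then show ?case by (simp add: err_def)
next
  case (compl A) then show ?case by (simp add: err_compl sets_cube_sigma)
next
  case (union A) then show ?case
    by (intro err_union) (auto simp: sets_cube_sigma)
qed
qed

lemma dep_chi: fixes \<omega> \<omega>' :: "nat \<Rightarrow> bool" shows "S \<subseteq> {..<n} \<Longrightarrow> (\<And>i. i < n \<Longrightarrow> \<omega> i = \<omega>' i) \<Longrightarrow> chi S \<omega> = chi S \<omega>'"
  unfolding chi_def by (intro prod.cong refl) auto

lemma dep_wp: "dep n (wp n c)"
  unfolding dep_def wp_def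
proof (intro allI impI sum.cong refl)
  fix \<omega> \<omega>' :: "nat \<Rightarrow> bool" and S assume "\<forall>i<n. \<omega> i = \<omega>' i" "S \<in> Pow {..<n}"
  then show "c S * chi S \<omega> = c S * chi S \<omega>'" using dep_chi[of S n \<omega> \<omega>'] by auto
qed

lemma bf_vals: "boolean_fun f \<Longrightarrow> f \<omega> = 1 \<or> f \<omega> = -1"
  unfolding boolean_fun_def by auto

lemma bf_bm: "boolean_fun f \<Longrightarrow> bm f"
proof -
  assume b: "boolean_fun f"
  have "\<bar>f \<omega>\<bar> \<le> 1" for \<omega> using bf_vals[OF b, of \<omega>] by auto
  then show ?thesis using b unfolding boolean_fun_def bm_def by auto
qed

lemma bf_sq: "boolean_fun f \<Longrightarrow> f \<omega> * f \<omega> = 1"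
  using bf_vals[of f \<omega>] by auto

definition IS :: "nat \<Rightarrow> ((nat \<Rightarrow> bool) \<Rightarrow> real) \<Rightarrow> (nat \<Rightarrow> bool) set" where
  "IS k f = {\<omega>. f (flip k \<omega>) \<noteq> f \<omega>}"

lemma IS_sets: "boolean_fun f \<Longrightarrow> IS k f \<in> sets cube"
proof -
  assume "boolean_fun f"
  then have fm: "f \<in> borel_measurable cube" unfolding boolean_fun_def by auto
  have g: "(\<lambda>\<omega>. f (flip k \<omega>) - f \<omega>) \<in> borel_measurable cube"
    by (intro borel_measurable_diff measurable_compose[OF flip_meas fm] fm)
  have "(\<lambda>\<omega>. f (flip k \<omega>) - f \<omega>) -` (-{0}) \<inter> space cube \<in> sets cube"
    by (rule measurable_sets[OF g]) auto
  moreover have "(\<lambda>\<omega>. f (flip k \<omega>) - f \<omega>) -` (-{0}) \<inter> space cube = IS k f"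
    unfolding IS_def by auto
  ultimately show ?thesis by simp
qed

lemma infl_IS: "influence k f = measure cube (IS k f)"
  unfolding influence_def IS_def by simp

lemma D_sq: "boolean_fun f \<Longrightarrow> (D k f \<omega>)^2 = indicator (IS k f) \<omega>"
proof -
  assume b: "boolean_fun f"
  from bf_vals[OF b, of \<omega>] bf_vals[OF b, of "flip k \<omega>"] show ?thesis
    unfolding D_def IS_def by (elim disjE) (simp_all add: indicator_def power2_eq_square)
qed

lemma D_cube: "boolean_fun f \<Longrightarrow> (D k f \<omega>)^3 = D k f \<omega>"
proof -
  assume b: "boolean_fun f"
  from bf_vals[OF b, of \<omega>] bf_vals[OF b, of "flip k \<omega>"] show ?thesis
    unfolding D_def by (elim disjE) (simp_all add: power3_eq_cube)
qed

lemma E_D_sq: "boolean_fun f \<Longrightarrow> EE (\<lambda>\<omega>. (D k f \<omega>)^2) = influence k f"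
  by (simp add: D_sq infl_IS)

lemma E_D_4: "boolean_fun f \<Longrightarrow> EE (\<lambda>\<omega>. ((D k f \<omega>)^2)^2) = influence k f"
proof -
  assume b: "boolean_fun f"
  have "((D k f \<omega>)^2)^2 = (D k f \<omega>)^2" for \<omega>
    using D_sq[OF b] by (simp add: indicator_def)
  then show ?thesis using E_D_sq[OF b] by simp
qed

lemma infl_nonneg: "0 \<le> influence k f" unfolding influence_def by simp

lemma infl_le1: "influence k f \<le> 1" unfolding influence_def by (rule PC.prob_le_1)

lemma a_bound:
  assumes b: "boolean_fun f" and k: "k < n" and w: "cex n f = wp n c"
  shows "(\<Sum>S\<in>Pow {..<n}. if k \<in> S then (c S)^2 else 0) \<le> influence k f"
proof -
  define a where "a = (\<Sum>S\<in>Pow {..<n}. if k \<in> S then (c S)^2 else 0)"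
  have bf: "bm f" by (rule bf_bm[OF b])
  have bDw: "bm (D k (wp n c))" by (rule bm_D) simp
  have depDw: "dep n (D k (wp n c))" unfolding D_wp by (rule dep_wp)
  have "a = EE (\<lambda>\<omega>. D k (wp n c) \<omega> * D k (wp n c) \<omega>)"
    unfolding a_def a_wp[symmetric] by (simp add: power2_eq_square)
  also have "\<dots> = EE (\<lambda>\<omega>. cex n (D k f) \<omega> * D k (wp n c) \<omega>)"
    unfolding w[symmetric] cex_D[OF k bf] ..
  also have "\<dots> = EE (\<lambda>\<omega>. D k f \<omega> * D k (wp n c) \<omega>)"
    by (rule tower[OF bm_D[OF bf] bDw depDw])
  finally have ae: "a = EE (\<lambda>\<omega>. D k f \<omega> * D k (wp n c) \<omega>)" .
  have "a^2 \<le> EE (\<lambda>\<omega>. (D k f \<omega>)^2) * EE (\<lambda>\<omega>. (D k (wp n c) \<omega>)^2)"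
    unfolding ae by (rule E_CS[OF bm_D[OF bf] bDw])
  also have "\<dots> = influence k f * a"
    unfolding E_D_sq[OF b] a_wp a_def ..
  finally have "a * a \<le> influence k f * a" by (simp add: power2_eq_square)
  moreover have "a \<ge> 0" unfolding a_def by (intro sum_nonneg) auto
  ultimately have "a \<le> influence k f"
  proof (cases "a = 0")
    case True then show ?thesis using infl_nonneg[of k f] by simp
  next
    case False
    then have "a > 0" using \<open>a \<ge> 0\<close> by simp
    then show ?thesis using \<open>a * a \<le> influence k f * a\<close> by (rule mult_right_le_imp_le[rotated])
  qed
  then show ?thesis unfolding a_def .
qed

lemma q_bound:
  assumes b: "boolean_fun f" and k: "k < n" and w: "cex n f = wp n c"
  shows "(\<Sum>S\<in>Pow {..<n}. if k \<in> S then (1/3)^card S * (c S)^2 else 0) \<le> influence k f * sqrt (influence k f)"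
proof -
  define q where "q = (\<Sum>S\<in>Pow {..<n}. if k \<in> S then (1/3)^card S * (c S)^2 else 0)"
  define p where "p = influence k f"
  define X where "X = D k f"
  define u where "u = uq n k c"
  have bf: "bm f" by (rule bf_bm[OF b])
  have bX: "bm X" unfolding X_def by (rule bm_D[OF bf])
  have bu: "bm u" unfolding u_def by simp
  have depu: "dep n u" unfolding u_def uq_def by (rule dep_wp)
  have q0: "q \<ge> 0" unfolding q_def by (intro sum_nonneg) auto
  have p0: "p \<ge> 0" unfolding p_def by (rule infl_nonneg)
  have "q = EE (\<lambda>\<omega>. cex n (D k f) \<omega> * u \<omega>)"
    unfolding q_def q_wp[symmetric] u_def w[symmetric] cex_D[OF k bf] ..
  also have "\<dots> = EE (\<lambda>\<omega>. X \<omega> * u \<omega>)"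
    unfolding X_def by (rule tower[OF bm_D[OF bf] bu depu])
  also have "\<dots> = EE (\<lambda>\<omega>. (X \<omega>)^2 * (X \<omega> * u \<omega>))"
  proof -
    have pw: "X \<omega> * u \<omega> = (X \<omega>)^2 * (X \<omega> * u \<omega>)" for \<omega>
    proof -
      have "(X \<omega>)^2 * (X \<omega> * u \<omega>) = (X \<omega>)^3 * u \<omega>" by (simp add: power3_eq_cube power2_eq_square)
      also have "\<dots> = X \<omega> * u \<omega>" using D_cube[OF b, of k \<omega>] unfolding X_def by simp
      finally show ?thesis by simp
    qed
    show ?thesis by (rule arg_cong[where f=EE]) (rule ext, rule pw)
  qed
  finally have qe: "q = EE (\<lambda>\<omega>. (X \<omega>)^2 * (X \<omega> * u \<omega>))" .
  have X4: "EE (\<lambda>\<omega>. ((X \<omega>)^2)^2) = p" unfolding X_def p_def by (rule E_D_4[OF b])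
  have "q^2 \<le> EE (\<lambda>\<omega>. ((X \<omega>)^2)^2) * EE (\<lambda>\<omega>. (X \<omega> * u \<omega>)^2)"
    unfolding qe by (rule E_CS) (intro bm_pow bX, intro bm_mult bX bu)
  also have "EE (\<lambda>\<omega>. (X \<omega> * u \<omega>)^2) = EE (\<lambda>\<omega>. (X \<omega>)^2 * (u \<omega>)^2)"
    by (simp add: power_mult_distrib)
  finally have c1: "q^2 \<le> p * EE (\<lambda>\<omega>. (X \<omega>)^2 * (u \<omega>)^2)" unfolding X4 .
  have "(EE (\<lambda>\<omega>. (X \<omega>)^2 * (u \<omega>)^2))^2 \<le> EE (\<lambda>\<omega>. ((X \<omega>)^2)^2) * EE (\<lambda>\<omega>. ((u \<omega>)^2)^2)"
    by (rule E_CS) (intro bm_pow bX, intro bm_pow bu)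
  also have "EE (\<lambda>\<omega>. ((u \<omega>)^2)^2) = EE (\<lambda>\<omega>. (u \<omega>)^4)" by (simp flip: power_mult)
  also have "\<dots> \<le> q^2" unfolding u_def q_def by (rule uq_hyper)
  finally have c2: "(EE (\<lambda>\<omega>. (X \<omega>)^2 * (u \<omega>)^2))^2 \<le> p * q^2" unfolding X4
    using p0 by (simp add: mult_left_mono)
  have e0: "EE (\<lambda>\<omega>. (X \<omega>)^2 * (u \<omega>)^2) \<ge> 0" by (rule E_nonneg) simp
  have "(q^2)^2 \<le> (p * EE (\<lambda>\<omega>. (X \<omega>)^2 * (u \<omega>)^2))^2"
    using c1 q0 by (intro power_mono) auto
  also have "\<dots> = p^2 * (EE (\<lambda>\<omega>. (X \<omega>)^2 * (u \<omega>)^2))^2" by (simp add: power_mult_distrib)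
  also have "\<dots> \<le> p^2 * (p * q^2)" using c2 by (intro mult_left_mono) auto
  finally have qq: "q^2 * q^2 \<le> p^3 * q^2" by (simp add: power2_eq_square power3_eq_cube algebra_simps)
  have "q^2 \<le> p^3"
  proof (cases "q = 0")
    case True then show ?thesis using p0 by simp
  next
    case False then have "q^2 > 0" by simp
    then show ?thesis using qq by (rule mult_right_le_imp_le[rotated])
  qed
  then have "sqrt (q^2) \<le> sqrt (p^3)" by (rule real_sqrt_le_mono)
  moreover have "sqrt (p^3) = p * sqrt p" using p0
    by (simp add: power3_eq_cube real_sqrt_mult)
  ultimately have "q \<le> p * sqrt p" using q0 by simp
  then show ?thesis unfolding q_def p_def .
qed

lemma cex_cmult: "cex n (\<lambda>\<omega>. c * F \<omega>) \<omega> = c * cex n F \<omega>"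
  unfolding cex_def by simp

lemma var_step:
  assumes b: "boolean_fun f" and d: "d > 0"
    and dl: "\<And>k. influence k f \<le> \<delta>" and sm: "summable (\<lambda>k. influence k f)"
  shows "Var f \<le> (\<Sum>k. influence k f) * (1/d + 3 powr d * sqrt \<delta>) + 2 * err n {\<omega>. f \<omega> = 1}"
proof -
  define A where "A = {\<omega>. f \<omega> = 1}"
  define m where "m = EE f"
  define K where "K = (\<Sum>k. influence k f) * (1/d + 3 powr d * sqrt \<delta>)"
  have bf: "bm f" by (rule bf_bm[OF b])
  have fm: "f \<in> borel_measurable cube" using b unfolding boolean_fun_def by auto
  have As: "A \<in> sets cube"
  proof -
    have "f -` {1} \<inter> space cube \<in> sets cube" by (rule measurable_sets[OF fm]) auto
    then show ?thesis unfolding A_def by (simp add: vimage_def)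
  qed
  have f_ind: "f \<omega> = 2 * ind A \<omega> - 1" for \<omega>
    using bf_vals[OF b, of \<omega>] unfolding A_def by (auto simp: indicator_def)
  have fA: "f = (\<lambda>\<omega>. 2 * ind A \<omega> - 1)" using f_ind by auto
  have bA: "bm (ind A)" by (rule bm_ind[OF As])
  obtain c where w: "cex n f = wp n c" using dep_wp_ex[OF dep_cex] by blast
  define w where "w = cex n f"
  have bw: "bm w" unfolding w_def by (rule bm_cex[OF bf])
  have depw: "dep n w" unfolding w_def by (rule dep_cex)
  have Vf: "Var f = 1 - m^2"
  proof -
    have "Var f = EE (\<lambda>\<omega>. (f \<omega> * f \<omega> - 2 * m * f \<omega>) + m^2)"
      unfolding Var_def m_def[symmetric] by (intro arg_cong[where f=EE] ext) (simp add: power2_eq_square algebra_simps)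
    also have "\<dots> = EE (\<lambda>\<omega>. f \<omega> * f \<omega>) - 2 * m * EE f + m^2"
      using bf by (simp add: E_add E_diff bm_diff bm_mult bm_cmult)
    also have "\<dots> = 1 - m^2" using bf_sq[OF b] unfolding m_def by (simp add: power2_eq_square)
    finally show ?thesis .
  qed
  have Ew: "EE w = m" unfolding w_def m_def by (rule E_cex[OF bf])
  have Vw: "EE (\<lambda>\<omega>. (w \<omega>)^2) - (EE w)^2 = (\<Sum>S\<in>Pow {..<n} - {{}}. (c S)^2)"
    unfolding w_def w by (rule var_wp)
  also have "\<dots> \<le> (\<Sum>k<n. (1/d) * (\<Sum>S\<in>Pow {..<n}. if k \<in> S then (c S)^2 else 0)
       + 3 powr d * (\<Sum>S\<in>Pow {..<n}. if k \<in> S then (1/3)^card S * (c S)^2 else 0))"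
    by (rule coef_bound[OF d])
  also have "\<dots> \<le> (\<Sum>k<n. influence k f * (1/d + 3 powr d * sqrt \<delta>))"
  proof (rule sum_mono)
    fix k assume "k \<in> {..<n}"
    then have k: "k < n" by simp
    have a: "(\<Sum>S\<in>Pow {..<n}. if k \<in> S then (c S)^2 else 0) \<le> influence k f"
      by (rule a_bound[OF b k w])
    have q: "(\<Sum>S\<in>Pow {..<n}. if k \<in> S then (1/3)^card S * (c S)^2 else 0) \<le> influence k f * sqrt (influence k f)"
      by (rule q_bound[OF b k w])
    also have "\<dots> \<le> influence k f * sqrt \<delta>"
      using dl[of k] infl_nonneg[of k f] by (intro mult_left_mono real_sqrt_le_mono) auto
    finally have q': "(\<Sum>S\<in>Pow {..<n}. if k \<in> S then (1/3)^card S * (c S)^2 else 0) \<le> influence k f * sqrt \<delta>" .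
    have p3: "3 powr d > 0" by simp
    have h1: "(1/d) * (\<Sum>S\<in>Pow {..<n}. if k \<in> S then (c S)^2 else 0) \<le> (1/d) * influence k f"
      using a d by (intro mult_left_mono) auto
    have h2: "3 powr d * (\<Sum>S\<in>Pow {..<n}. if k \<in> S then (1/3)^card S * (c S)^2 else 0) \<le> 3 powr d * (influence k f * sqrt \<delta>)"
      using q' p3 by (intro mult_left_mono) auto
    have "(1/d) * (\<Sum>S\<in>Pow {..<n}. if k \<in> S then (c S)^2 else 0)
       + 3 powr d * (\<Sum>S\<in>Pow {..<n}. if k \<in> S then (1/3)^card S * (c S)^2 else 0)
       \<le> (1/d) * influence k f + 3 powr d * (influence k f * sqrt \<delta>)"
      by (rule add_mono[OF h1 h2])
    also have "\<dots> = influence k f * (1/d + 3 powr d * sqrt \<delta>)"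
      by (simp add: algebra_simps)
    finally show "(1/d) * (\<Sum>S\<in>Pow {..<n}. if k \<in> S then (c S)^2 else 0)
       + 3 powr d * (\<Sum>S\<in>Pow {..<n}. if k \<in> S then (1/3)^card S * (c S)^2 else 0)
       \<le> influence k f * (1/d + 3 powr d * sqrt \<delta>)" .
  qed
  also have "\<dots> = (\<Sum>k<n. influence k f) * (1/d + 3 powr d * sqrt \<delta>)"
    by (simp add: sum_distrib_right)
  also have "\<dots> \<le> K" unfolding K_def
  proof (rule mult_right_mono)
    show "(\<Sum>k<n. influence k f) \<le> (\<Sum>k. influence k f)"
      by (rule sum_le_suminf[OF sm]) (auto simp: infl_nonneg)
    show "0 \<le> 1/d + 3 powr d * sqrt \<delta>"
    proof -
      have "0 \<le> \<delta>" using dl[of 0] infl_nonneg[of 0 f] by linarith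
      then show ?thesis using d by (intro add_nonneg_nonneg) auto
    qed
  qed
  finally have VwK: "EE (\<lambda>\<omega>. (w \<omega>)^2) - m^2 \<le> K" unfolding Ew .
  have "EE (\<lambda>\<omega>. (w \<omega>)^2) = EE (\<lambda>\<omega>. cex n f \<omega> * w \<omega>)"
    unfolding w_def by (simp add: power2_eq_square)
  also have "\<dots> = EE (\<lambda>\<omega>. f \<omega> * w \<omega>)" by (rule tower[OF bf bw depw])
  finally have w2: "EE (\<lambda>\<omega>. (w \<omega>)^2) = EE (\<lambda>\<omega>. f \<omega> * w \<omega>)" .
  have wA: "w \<omega> = 2 * cex n (ind A) \<omega> - 1" for \<omega>
  proof -
    have "w \<omega> = cex n (\<lambda>\<omega>. 2 * ind A \<omega> - 1) \<omega>" unfolding w_def by (subst fA) simp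
    also have "\<dots> = cex n (\<lambda>\<omega>. 2 * ind A \<omega>) \<omega> - 1"
      by (subst cex_diff) (auto intro: bm_cmult bA)
    also have "\<dots> = 2 * cex n (ind A) \<omega> - 1" by (simp add: cex_cmult)
    finally show ?thesis .
  qed
  have pw: "f \<omega> * w \<omega> \<ge> 1 - 2 * \<bar>cex n (ind A) \<omega> - ind A \<omega>\<bar>" for \<omega>
  proof -
    have "f \<omega> * w \<omega> = f \<omega> * f \<omega> - f \<omega> * (f \<omega> - w \<omega>)" by (simp add: algebra_simps)
    also have "\<dots> = 1 - f \<omega> * (f \<omega> - w \<omega>)" using bf_sq[OF b] by simp
    also have "f \<omega> - w \<omega> = 2 * (ind A \<omega> - cex n (ind A) \<omega>)" by (simp add: f_ind wA)
    finally have e: "f \<omega> * w \<omega> = 1 - f \<omega> * (2 * (ind A \<omega> - cex n (ind A) \<omega>))" .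
    have "f \<omega> * (2 * (ind A \<omega> - cex n (ind A) \<omega>)) \<le> \<bar>f \<omega> * (2 * (ind A \<omega> - cex n (ind A) \<omega>))\<bar>" by simp
    also have "\<dots> = 2 * \<bar>cex n (ind A) \<omega> - ind A \<omega>\<bar>"
    proof -
      have "\<bar>f \<omega>\<bar> = 1" using bf_vals[OF b, of \<omega>] by auto
      then have "\<bar>f \<omega> * (2 * (ind A \<omega> - cex n (ind A) \<omega>))\<bar> = 2 * \<bar>ind A \<omega> - cex n (ind A) \<omega>\<bar>"
        using abs_mult[of "f \<omega>" "2 * (ind A \<omega> - cex n (ind A) \<omega>)"] abs_mult[of 2 "ind A \<omega> - cex n (ind A) \<omega>"]
        by (simp only:) simp
      then show ?thesis by (simp add: abs_minus_commute)
    qed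
    finally show ?thesis using e by simp
  qed
  have "1 - 2 * err n A \<le> EE (\<lambda>\<omega>. f \<omega> * w \<omega>)"
  proof -
    have "EE (\<lambda>\<omega>. 1 - 2 * \<bar>cex n (ind A) \<omega> - ind A \<omega>\<bar>) \<le> EE (\<lambda>\<omega>. f \<omega> * w \<omega>)"
      using pw by (intro E_mono bm_diff bm_cmult bm_abs bm_cex bA bm_mult bf bw) auto
    moreover have "EE (\<lambda>\<omega>. 1 - 2 * \<bar>cex n (ind A) \<omega> - ind A \<omega>\<bar>) = 1 - 2 * err n A"
    proof -
      have bb: "bm (\<lambda>\<omega>. 2 * \<bar>cex n (ind A) \<omega> - ind A \<omega>\<bar>)"
        by (intro bm_cmult bm_abs bm_diff bm_cex bA)
      show ?thesis unfolding err_def by (subst E_diff[OF bm_const bb]) simp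
    qed
    ultimately show ?thesis by simp
  qed
  then have "Var f \<le> K + 2 * err n A" using VwK w2 Vf by linarith
  then show ?thesis unfolding K_def A_def .
qed

lemma var_bound:
  assumes b: "boolean_fun f" and d: "d > 0"
    and dl: "\<And>k. influence k f \<le> \<delta>" and sm: "summable (\<lambda>k. influence k f)"
  shows "Var f \<le> (\<Sum>k. influence k f) * (1/d + 3 powr d * sqrt \<delta>)"
proof -
  define A where "A = {\<omega>. f \<omega> = 1}"
  have fm: "f \<in> borel_measurable cube" using b unfolding boolean_fun_def by auto
  have As: "A \<in> sets cube"
  proof -
    have "f -` {1} \<inter> space cube \<in> sets cube" by (rule measurable_sets[OF fm]) auto
    then show ?thesis unfolding A_def by (simp add: vimage_def)
  qed
  let ?K = "(\<Sum>k. influence k f) * (1/d + 3 powr d * sqrt \<delta>)"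
  have "(\<lambda>n. ?K + 2 * err n A) \<longlonglongrightarrow> ?K + 2 * 0"
    by (intro tendsto_add tendsto_const tendsto_mult err_lim As)
  then have lim: "(\<lambda>n. ?K + 2 * err n A) \<longlonglongrightarrow> ?K" by simp
  show ?thesis
    by (rule LIMSEQ_le_const[OF lim]) (use var_step[OF b d dl sm] in \<open>auto simp: A_def\<close>)
qed

lemma final_ineq:
  fixes V I L :: real
  assumes L: "L > 0" and I: "I \<ge> 0"
    and V: "V \<le> I * (1 / (L / (4 * ln 3)) + 3 powr (L / (4 * ln 3)) * sqrt (exp (-L)))"
  shows "V * L \<le> 12 * I"
proof -
  have l3: "ln (3::real) > 0" by simp
  define d where "d = L / (4 * ln 3)"
  have p: "3 powr d = exp (L/4)" unfolding d_def powr_def using l3 by simp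
  have s: "sqrt (exp (-L)) = exp (-L/2)"
  proof -
    have "sqrt (exp (-L)) = exp (-L) powr (1/2)" by (simp add: powr_half_sqrt)
    also have "\<dots> = exp (-L/2)" unfolding powr_def by simp
    finally show ?thesis .
  qed
  have e: "3 powr d * sqrt (exp (-L)) = exp (-(L/4))"
    unfolding p s by (simp add: exp_add[symmetric])
  have dd: "1 / d = 4 * ln 3 / L" unfolding d_def by simp
  have "V * L \<le> I * (4 * ln 3 / L + exp (-(L/4))) * L"
    using V L unfolding d_def[symmetric] e dd by (intro mult_right_mono) auto
  also have "\<dots> = I * (4 * ln 3 + L * exp (-(L/4)))" using L by (simp add: field_simps)
  also have "\<dots> \<le> I * (4 * 2 + 4)"
  proof -
    have "1 + 2 \<le> exp (2::real)" by (rule exp_ge_add_one_self)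
    then have "ln 3 \<le> ln (exp (2::real))" by (subst ln_le_cancel_iff) auto
    then have h1: "4 * ln 3 \<le> (4 * 2::real)" by simp
    have "1 + L/4 \<le> exp (L/4)" by (rule exp_ge_add_one_self)
    then have "L/4 \<le> exp (L/4)" by linarith
    then have "L/4 * exp (-(L/4)) \<le> exp (L/4) * exp (-(L/4))"
      by (intro mult_right_mono) auto
    also have "\<dots> = 1" by (simp add: exp_minus)
    finally have h2: "L * exp (-(L/4)) \<le> 4" by simp
    show ?thesis by (intro mult_left_mono add_mono h1 h2 I)
  qed
  finally show ?thesis by simp
qed

theorem mainTheorem16:
  shows "\<exists>c>0. \<forall>f. boolean_fun f \<longrightarrow> (SUP i. influence i f) > 0 \<longrightarrow>
           ennreal (c * Var f * ln (1 / (SUP i. influence i f))) \<le> total_influence f"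
proof (intro exI[of _ "1/12"] conjI allI impI)
  show "(0::real) < 1/12" by simp
  fix f assume b: "boolean_fun f" and dpos: "(SUP i. influence i f) > 0"
  define \<delta> where "\<delta> = (SUP i. influence i f)"
  have bdd: "bdd_above (range (\<lambda>i. influence i f))"
    by (rule bdd_aboveI2[where M=1]) (rule infl_le1)
  have dl: "influence k f \<le> \<delta>" for k unfolding \<delta>_def by (rule cSUP_upper[OF UNIV_I bdd])
  have V0: "Var f \<ge> 0" unfolding Var_def by (rule E_nonneg) simp
  have d0: "\<delta> > 0" using dpos unfolding \<delta>_def .
  show "ennreal (1/12 * Var f * ln (1 / (SUP i. influence i f))) \<le> total_influence f"
  proof (cases "total_influence f = top")
    case True then show ?thesis by simp
  next
    case False
    have sm: "summable (\<lambda>k. influence k f)"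
      using False unfolding total_influence_def by (intro summable_suminf_not_top infl_nonneg)
    have tot: "total_influence f = ennreal (\<Sum>k. influence k f)"
      unfolding total_influence_def by (rule suminf_ennreal2[OF infl_nonneg sm])
    have I0: "(\<Sum>k. influence k f) \<ge> 0" by (intro suminf_nonneg sm infl_nonneg)
    show ?thesis
    proof (cases "\<delta> \<ge> 1")
      case True
      have "ln (1 / \<delta>) \<le> 0" using True d0 by simp
      then have "1/12 * Var f * ln (1 / \<delta>) \<le> 0" using V0
        by (simp add: mult_nonneg_nonpos)
      then show ?thesis unfolding \<delta>_def[symmetric] by (simp add: ennreal_neg)
    next
      case False
      define L where "L = ln (1 / \<delta>)"
      have L: "L > 0" unfolding L_def using False d0 by simp
      have de: "\<delta> = exp (-L)" unfolding L_def using d0 by (simp add: ln_div)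
      have dpos': "L / (4 * ln 3) > 0" using L by simp
      have "Var f \<le> (\<Sum>k. influence k f) * (1 / (L / (4 * ln 3)) + 3 powr (L / (4 * ln 3)) * sqrt \<delta>)"
        by (rule var_bound[OF b dpos' dl sm])
      then have "Var f * L \<le> 12 * (\<Sum>k. influence k f)"
        unfolding de by (rule final_ineq[OF L I0])
      then have "1/12 * Var f * L \<le> (\<Sum>k. influence k f)" by simp
      then show ?thesis unfolding \<delta>_def[symmetric] L_def[symmetric] tot
        by (rule ennreal_leI)
    qed
  qed
qed

end
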